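(* Let $L$ be an $\omega$-regular language over $\Sigma$, let $M=(\Sigma,Q,q_0,\delta)$ be a complete DFA, and let $u\in\Sigma^*$. Define the relation $\approx^u_{S'}$ on $\Sigma^*$ by $x\approx^u_{S'}y$ iff $M(ux)=M(uy)$ and for every $v\in\Sigma^*$, if $M(uxv)=M(u)$ then $\big(u(xv)^\omega\in L\Leftrightarrow u(yv)^\omega\in L\big)$. Then the index of $\approx^u_{S'}$ is bounded by $|Q|\cdot|\approx^u_P|$, where $|\approx^u_P|$ is the index of $\approx^u_P$.
   Context: For a complete DFA $M$ and finite word $w$, $M(w)$ is the state reached from the initial state on $w$. The relation $\approx^u_P$ on $\Sigma^*$ is defined by $x\approx^u_P y$ iff for all $v\in\Sigma^*$, $u(xv)^\omega\in L\Leftrightarrow u(yv)^\omega\in L$. The index of an equivalence relation is its number of equivalence classes. *)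

theory Defs
  imports Main "HOL-Library.Omega_Words_Fun" "HOL-Library.Extended_Nat"
begin

(* omega-regular languages: accepted by a nondeterministic Buechi automaton
   with finitely many states (states encoded as natural numbers) *)
definition omega_regular :: "'a word set \<Rightarrow> bool" where
  "omega_regular L \<longleftrightarrow>
     (\<exists>(Qb::nat set) (I::nat set) (Delta::(nat \<times> 'a \<times> nat) set) (F::nat set).
        finite Qb \<and> I \<subseteq> Qb \<and> F \<subseteq> Qb \<and> Delta \<subseteq> Qb \<times> UNIV \<times> Qb \<and>
        L = {w. \<exists>r. r 0 \<in> I \<and> (\<forall>i. (r i, w i, r (Suc i)) \<in> Delta) \<and>
                       (\<exists>\<^sub>\<infinity>i. r i \<in> F)})"

(* complete DFA with state type 'q, initial state q0, transition function delta;
   M(w) = dfa_run q0 delta w *)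
definition dfa_run :: "'q \<Rightarrow> ('q \<Rightarrow> 'a \<Rightarrow> 'q) \<Rightarrow> 'a list \<Rightarrow> 'q" where
  "dfa_run q0 delta w = foldl delta q0 w"

definition periodic_rel :: "'a word set \<Rightarrow> 'a list \<Rightarrow> 'a list \<Rightarrow> 'a list \<Rightarrow> bool" where
  "periodic_rel L u x y \<longleftrightarrow> (\<forall>v. (u \<frown> (x @ v)\<^sup>\<omega> \<in> L) \<longleftrightarrow> (u \<frown> (y @ v)\<^sup>\<omega> \<in> L))"

definition syntactic'_rel :: "'a word set \<Rightarrow> 'q \<Rightarrow> ('q \<Rightarrow> 'a \<Rightarrow> 'q) \<Rightarrow> 'a list \<Rightarrow> 'a list \<Rightarrow> 'a list \<Rightarrow> bool" where
  "syntactic'_rel L q0 delta u x y \<longleftrightarrow>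
     dfa_run q0 delta (u @ x) = dfa_run q0 delta (u @ y) \<and>
     (\<forall>v. dfa_run q0 delta (u @ x @ v) = dfa_run q0 delta u \<longrightarrow>
          ((u \<frown> (x @ v)\<^sup>\<omega> \<in> L) \<longleftrightarrow> (u \<frown> (y @ v)\<^sup>\<omega> \<in> L)))"

definition rel_index :: "('a list \<Rightarrow> 'a list \<Rightarrow> bool) \<Rightarrow> enat" where
  "rel_index R = (if finite (UNIV // {(x, y). R x y}) then enat (card (UNIV // {(x, y). R x y})) else \<infinity>)"

end

theory Submission
  imports Defs
begin

lemma quot_image_bound:
  fixes S :: "('x \<times> 'x) set" and f :: "'x \<Rightarrow> 'z"
  assumes "\<And>x y. f x = f y \<Longrightarrow> S``{x} = S``{y}"
  shows "UNIV // S = (\<lambda>z. S``{SOME x. f x = z}) ` range f"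
proof -
  have "UNIV // S = (\<lambda>x. S``{x}) ` UNIV" by (auto simp: quotient_def)
  also have "\<dots> = (\<lambda>z. S``{SOME x. f x = z}) ` range f"
  proof (intro equalityI subsetI)
    fix C assume "C \<in> (\<lambda>x. S``{x}) ` UNIV"
    then obtain x where C: "C = S``{x}" by blast
    have "f (SOME y. f y = f x) = f x" by (rule someI) simp
    then have "S``{SOME y. f y = f x} = C" using assms C by metis
    then show "C \<in> (\<lambda>z. S``{SOME x. f x = z}) ` range f" by blast
  qed auto
  finally show ?thesis .
qed

theorem lemma11:
  fixes L :: "('a::finite) word set"
    and q0 :: "'q::finite"
    and delta :: "'q \<Rightarrow> 'a \<Rightarrow> 'q"
    and u :: "'a list"
  assumes "omega_regular L"
  shows "rel_index (syntactic'_rel L q0 delta u) \<le> enat (card (UNIV :: 'q set)) * rel_index (periodic_rel L u)"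
proof (cases "finite (UNIV // {(x, y). periodic_rel L u x y})")
  case False
  have "card (UNIV :: 'q set) > 0" by (simp add: finite_UNIV_card_ge_0)
  then show ?thesis using False by (simp add: rel_index_def)
next
  case True
  define P where "P = {(x, y). periodic_rel L u x y}"
  define S where "S = {(x, y). syntactic'_rel L q0 delta u x y}"
  define f where "f x = (dfa_run q0 delta (u @ x), P``{x})" for x
  have run: "dfa_run q0 delta (u @ x @ v) = foldl delta (dfa_run q0 delta (u @ x)) v" for x v
    by (simp add: dfa_run_def)
  have Strans: "syntactic'_rel L q0 delta u x z"
    if "syntactic'_rel L q0 delta u x y" "syntactic'_rel L q0 delta u y z" for x y z
    using that unfolding syntactic'_rel_def by (metis run)
  have Ssym: "syntactic'_rel L q0 delta u y x" if "syntactic'_rel L q0 delta u x y" for x y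
    using that unfolding syntactic'_rel_def by (metis run)
  have key: "S``{x} = S``{y}" if "f x = f y" for x y
  proof -
    have "(x, y) \<in> P" using that unfolding f_def P_def by (auto simp: periodic_rel_def)
    then have "syntactic'_rel L q0 delta u x y"
      using that unfolding f_def P_def syntactic'_rel_def periodic_rel_def by auto
    then show ?thesis unfolding S_def using Strans Ssym by blast
  qed
  have eq: "UNIV // S = (\<lambda>z. S``{SOME x. f x = z}) ` range f"
    by (rule quot_image_bound) (rule key)
  have PQ: "P``{x} \<in> UNIV // P" for x by (auto simp: quotient_def)
  have rf: "range f \<subseteq> (UNIV::'q set) \<times> (UNIV // P)" using PQ by (auto simp: f_def)
  have finP: "finite (UNIV // P)" using True P_def by simp
  have fin: "finite ((UNIV::'q set) \<times> (UNIV // P))" using finP by (simp add: finite_cartesian_product)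
  have finS: "finite (UNIV // S)" using eq rf fin by (metis finite_imageI finite_subset)
  have "card (UNIV // S) \<le> card (range f)" unfolding eq by (rule card_image_le) (rule finite_subset[OF rf fin])
  also have "\<dots> \<le> card ((UNIV::'q set) \<times> (UNIV // P))" by (rule card_mono[OF fin rf])
  also have "\<dots> = card (UNIV :: 'q set) * card (UNIV // P)" by (simp add: card_cartesian_product)
  finally have "card (UNIV // S) \<le> card (UNIV :: 'q set) * card (UNIV // P)" .
  then show ?thesis using finS finP unfolding rel_index_def S_def P_def by simp
qed

end
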